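(* Let $p\in\mathbb{C}[z_1,\dots,z_d]$ have no zeros in $\mathbb{D}^d$ and multidegree $n=(n_1,\dots,n_d)$, let $\tilde p(z)=z^n\overline{p(1/\bar z)}$, and suppose $p$ vanishes to order $M$ at $u=(1,\dots,1)$. Then we can write $p(u-\zeta)=\sum_{j=M}^{|n|}P_j(\zeta)$ and $\tilde p(u-\zeta)=\sum_{j=M}^{|n|}Q_j(\zeta)$ with $P_j,Q_j$ homogeneous of degree $j$, and: there is $\nu\in\mathbb{T}$ such that $\nu P_M$ has real coefficients, and $Q_M$ is a unimodular constant multiple of $P_M$.
   Context: $\mathbb{D}$ is the open unit disk, $\mathbb{T}$ the unit circle. $z^n=z_1^{n_1}\cdots z_d^{n_d}$, $1/\bar z=(1/\bar z_1,\dots,1/\bar z_d)$, $|n|=n_1+\dots+n_d$. Vanishing to order $M$ at $u$ means the lowest-degree nonzero homogeneous term of $\zeta\mapsto p(u-\zeta)$ has degree $M$. *)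

theory Defs
  imports "HOL-Analysis.Analysis"
begin

text \<open>A polynomial in the d variables z_0,...,z_{d-1} is represented by its coefficient
  function c on multi-indices (alpha :: nat => nat); it is required to have finite support
  and only multi-indices with alpha i = 0 for i >= d may carry nonzero coefficients.\<close>

definition is_mpoly :: "nat \<Rightarrow> ((nat \<Rightarrow> nat) \<Rightarrow> complex) \<Rightarrow> bool" where
  "is_mpoly d c \<longleftrightarrow> finite {\<alpha>. c \<alpha> \<noteq> 0} \<and> (\<forall>\<alpha>. c \<alpha> \<noteq> 0 \<longrightarrow> (\<forall>i\<ge>d. \<alpha> i = 0))"

definition peval :: "nat \<Rightarrow> ((nat \<Rightarrow> nat) \<Rightarrow> complex) \<Rightarrow> (nat \<Rightarrow> complex) \<Rightarrow> complex" where
  "peval d c z = (\<Sum>\<alpha>\<in>{\<alpha>. c \<alpha> \<noteq> 0}. c \<alpha> * (\<Prod>i<d. z i ^ \<alpha> i))"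

definition mdeg :: "((nat \<Rightarrow> nat) \<Rightarrow> complex) \<Rightarrow> nat \<Rightarrow> nat" where
  "mdeg c i = Max ({\<alpha> i | \<alpha>. c \<alpha> \<noteq> 0} \<union> {0})"

text \<open>Reflection: coefficients of z^n conj(p(1/conj z)), i.e. tilde c(alpha) = conj(c(n - alpha)).\<close>
definition reflect :: "((nat \<Rightarrow> nat) \<Rightarrow> complex) \<Rightarrow> (nat \<Rightarrow> nat) \<Rightarrow> complex" where
  "reflect c \<alpha> = (if (\<forall>i. \<alpha> i \<le> mdeg c i) then cnj (c (\<lambda>i. mdeg c i - \<alpha> i)) else 0)"

text \<open>Coefficients of the homogeneous part of degree j of zeta |-> p(u - zeta),
  u = (1,...,1), obtained by expanding (1 - zeta)^alpha binomially.\<close>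
definition hcoef :: "nat \<Rightarrow> ((nat \<Rightarrow> nat) \<Rightarrow> complex) \<Rightarrow> nat \<Rightarrow> (nat \<Rightarrow> nat) \<Rightarrow> complex" where
  "hcoef d c j \<beta> =
     (if (\<Sum>i<d. \<beta> i) = j \<and> (\<forall>i\<ge>d. \<beta> i = 0)
      then (\<Sum>\<alpha>\<in>{\<alpha>. c \<alpha> \<noteq> 0}. c \<alpha> * (\<Prod>i<d. of_nat (\<alpha> i choose \<beta> i) * (-1) ^ \<beta> i))
      else 0)"

definition vanishes_to_order :: "nat \<Rightarrow> ((nat \<Rightarrow> nat) \<Rightarrow> complex) \<Rightarrow> nat \<Rightarrow> bool" where
  "vanishes_to_order d c M \<longleftrightarrow>
     (\<forall>j<M. \<forall>\<beta>. hcoef d c j \<beta> = 0) \<and> (\<exists>\<beta>. hcoef d c M \<beta> \<noteq> 0)"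

end

theory Submission
  imports Defs "HOL-Computational_Algebra.Fundamental_Theorem_Algebra" "HOL-Complex_Analysis.Complex_Analysis"
begin


definition mon :: "nat \<Rightarrow> (nat\<Rightarrow>nat) \<Rightarrow> (nat\<Rightarrow>complex) \<Rightarrow> complex" where
  "mon d \<beta> z = (\<Prod>i<d. z i ^ \<beta> i)"
definition Bx :: "(nat\<Rightarrow>nat) \<Rightarrow> (nat\<Rightarrow>nat) set" where
  "Bx n = {\<alpha>. \<forall>i. \<alpha> i \<le> n i}"
definition TT :: "nat \<Rightarrow> (nat\<Rightarrow>nat) \<Rightarrow> (nat\<Rightarrow>nat) \<Rightarrow> complex" where
  "TT d \<alpha> \<beta> = (\<Prod>i<d. of_nat (\<alpha> i choose \<beta> i) * (-1) ^ \<beta> i)"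

lemma finite_Bx: assumes "\<forall>i\<ge>d. n i = 0" shows "finite (Bx n)"
proof -
  have "Bx n \<subseteq> (\<lambda>f i. if i<d then f i else 0) ` (PiE {..<d} (\<lambda>i. {..n i}))"
  proof
    fix \<alpha> assume a: "\<alpha> \<in> Bx n"
    show "\<alpha> \<in> (\<lambda>f i. if i<d then f i else 0) ` (PiE {..<d} (\<lambda>i. {..n i}))"
      by (rule image_eqI[where x="restrict \<alpha> {..<d}"]) (use a assms in \<open>auto simp: Bx_def fun_eq_iff\<close>, metis le_zero_eq not_le)
  qed
  thus ?thesis by (rule finite_subset) (auto intro: finite_PiE)
qed

lemma peval_superset: "finite S \<Longrightarrow> {\<alpha>. c \<alpha> \<noteq> 0} \<subseteq> S \<Longrightarrow> peval d c z = (\<Sum>\<alpha>\<in>S. c \<alpha> * mon d \<alpha> z)"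
  unfolding peval_def mon_def by (rule sum.mono_neutral_left) auto

lemma prod_expand:
  fixes f :: "nat \<Rightarrow> nat \<Rightarrow> 'c::comm_semiring_1"
  assumes "\<forall>i\<ge>d. n i = 0"
  shows "(\<Prod>i<d. \<Sum>b\<le>n i. f i b) = (\<Sum>\<beta>\<in>Bx n. \<Prod>i<d. f i (\<beta> i))"
proof -
  have "(\<Prod>i<d. \<Sum>b\<le>n i. f i b) = (\<Sum>g\<in>PiE {..<d} (\<lambda>i. {..n i}). \<Prod>i<d. f i (g i))"
    by (rule prod_sum_PiE) auto
  also have "\<dots> = (\<Sum>\<beta>\<in>Bx n. \<Prod>i<d. f i (\<beta> i))"
  proof (rule sum.reindex_bij_witness[where i="\<lambda>\<beta>. restrict \<beta> {..<d}" and j="\<lambda>g i. if i<d then g i else 0"])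
    fix \<beta> assume "\<beta> \<in> Bx n"
    thus "(\<lambda>i. if i < d then restrict \<beta> {..<d} i else 0) = \<beta>"
      using assms by (auto simp: Bx_def fun_eq_iff) (metis le_zero_eq not_le)
  next
    fix \<beta> assume "\<beta> \<in> Bx n"
    thus "restrict \<beta> {..<d} \<in> PiE {..<d} (\<lambda>i. {..n i})" by (auto simp: Bx_def)
  next
    fix g assume "g \<in> PiE {..<d} (\<lambda>i. {..n i})"
    thus "restrict (\<lambda>i. if i < d then g i else 0) {..<d} = g"
      by (auto simp: fun_eq_iff PiE_def extensional_def)
  next
    fix g assume "g \<in> PiE {..<d} (\<lambda>i. {..n i})"
    thus "(\<lambda>i. if i < d then g i else 0) \<in> Bx n" using assms by (auto simp: Bx_def PiE_def)
  next
    fix g assume "g \<in> PiE {..<d} (\<lambda>i. {..n i})"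
    thus "(\<Prod>i<d. f i ((\<lambda>i. if i < d then g i else 0) i)) = (\<Prod>i<d. f i (g i))"
      by (auto intro: prod.cong)
  qed
  finally show ?thesis .
qed

lemma hcoef_supp:
  assumes sup: "{\<alpha>. c \<alpha> \<noteq> 0} \<subseteq> Bx n" and nz: "\<forall>i\<ge>d. n i = 0"
  shows "{\<beta>. hcoef d c j \<beta> \<noteq> 0} \<subseteq> Bx n"
proof
  fix \<beta> assume h: "\<beta> \<in> {\<beta>. hcoef d c j \<beta> \<noteq> 0}"
  show "\<beta> \<in> Bx n"
  proof (rule ccontr)
    assume "\<beta> \<notin> Bx n"
    then obtain k where k: "n k < \<beta> k" by (auto simp: Bx_def not_le)
    show False
    proof (cases "k < d")
      case False
      have "\<beta> k = 0" using h False unfolding hcoef_def by (auto split: if_splits)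
      then show False using k by simp
    next
      case True
      have P0: "(\<Prod>i<d. of_nat (\<alpha> i choose \<beta> i) * (-1::complex) ^ \<beta> i) = 0" if "c \<alpha> \<noteq> 0" for \<alpha>
      proof -
        have "\<alpha> k \<le> n k" using sup that by (auto simp: Bx_def)
        hence "\<alpha> k choose \<beta> k = 0" using k by simp
        thus ?thesis using True by (intro prod_zero) auto
      qed
      have s0: "(\<Sum>\<alpha>\<in>{\<alpha>. c \<alpha> \<noteq> 0}. c \<alpha> * (\<Prod>i<d. of_nat (\<alpha> i choose \<beta> i) * (-1::complex) ^ \<beta> i)) = 0"
        by (rule sum.neutral) (use P0 in \<open>simp del: prod_zero_iff\<close>)
      have "hcoef d c j \<beta> = 0" unfolding hcoef_def s0 by simp
      thus False using h by simp
    qed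
  qed
qed

lemma hcoef_alt:
  assumes sup: "{\<alpha>. c \<alpha> \<noteq> 0} \<subseteq> Bx n" and nz: "\<forall>i\<ge>d. n i = 0"
  shows "hcoef d c j \<beta> = (if (\<Sum>i<d. \<beta> i) = j \<and> (\<forall>i\<ge>d. \<beta> i = 0) then (\<Sum>\<alpha>\<in>Bx n. c \<alpha> * TT d \<alpha> \<beta>) else 0)"
proof -
  have "(\<Sum>\<alpha>\<in>{\<alpha>. c \<alpha> \<noteq> 0}. c \<alpha> * TT d \<alpha> \<beta>) = (\<Sum>\<alpha>\<in>Bx n. c \<alpha> * TT d \<alpha> \<beta>)"
    by (rule sum.mono_neutral_left) (use sup finite_Bx[OF nz] in auto)
  thus ?thesis by (simp only: hcoef_def TT_def)
qed

lemma one_minus_pow: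
  fixes z :: complex
  assumes "a \<le> m"
  shows "(1 - z) ^ a = (\<Sum>b\<le>m. of_nat (a choose b) * (-1) ^ b * z ^ b)"
proof -
  have "(1 - z) ^ a = (- z + 1) ^ a" by simp
  also have "\<dots> = (\<Sum>b\<le>a. of_nat (a choose b) * (-z) ^ b * 1 ^ (a - b))"
    by (rule binomial_ring)
  also have "\<dots> = (\<Sum>b\<le>a. of_nat (a choose b) * (-1) ^ b * z ^ b)"
    by (intro sum.cong refl) (subst power_minus, simp)
  also have "\<dots> = (\<Sum>b\<le>m. of_nat (a choose b) * (-1) ^ b * z ^ b)"
    by (rule sum.mono_neutral_left) (use assms in auto)
  finally show ?thesis .
qed

lemma expand:
  assumes sup: "{\<alpha>. c \<alpha> \<noteq> 0} \<subseteq> Bx n" and nz: "\<forall>i\<ge>d. n i = 0"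
  shows "peval d c (\<lambda>i. 1 - \<zeta> i) = (\<Sum>j=0..(\<Sum>i<d. n i). peval d (hcoef d c j) \<zeta>)"
proof -
  have fin: "finite (Bx n)" using finite_Bx[OF nz] .
  have pw: "mon d \<alpha> (\<lambda>i. 1 - \<zeta> i) = (\<Sum>\<beta>\<in>Bx n. TT d \<alpha> \<beta> * mon d \<beta> \<zeta>)" if a: "\<alpha> \<in> Bx n" for \<alpha>
  proof -
    have "mon d \<alpha> (\<lambda>i. 1 - \<zeta> i) = (\<Prod>i<d. \<Sum>b\<le>n i. of_nat (\<alpha> i choose b) * (-1) ^ b * \<zeta> i ^ b)"
      unfolding mon_def by (intro prod.cong refl one_minus_pow) (use a in \<open>auto simp: Bx_def\<close>)
    also have "\<dots> = (\<Sum>\<beta>\<in>Bx n. \<Prod>i<d. of_nat (\<alpha> i choose \<beta> i) * (-1) ^ \<beta> i * \<zeta> i ^ \<beta> i)"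
      by (rule prod_expand[OF nz])
    also have "\<dots> = (\<Sum>\<beta>\<in>Bx n. TT d \<alpha> \<beta> * mon d \<beta> \<zeta>)"
      unfolding TT_def mon_def by (simp add: prod.distrib)
    finally show ?thesis .
  qed
  have "peval d c (\<lambda>i. 1 - \<zeta> i) = (\<Sum>\<alpha>\<in>Bx n. c \<alpha> * mon d \<alpha> (\<lambda>i. 1 - \<zeta> i))"
    by (rule peval_superset[OF fin sup])
  also have "\<dots> = (\<Sum>\<alpha>\<in>Bx n. \<Sum>\<beta>\<in>Bx n. c \<alpha> * TT d \<alpha> \<beta> * mon d \<beta> \<zeta>)"
    by (intro sum.cong refl) (simp add: pw sum_distrib_left mult.assoc)
  also have "\<dots> = (\<Sum>\<beta>\<in>Bx n. (\<Sum>\<alpha>\<in>Bx n. c \<alpha> * TT d \<alpha> \<beta>) * mon d \<beta> \<zeta>)"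
    by (subst sum.swap) (simp add: sum_distrib_right)
  also have "\<dots> = (\<Sum>\<beta>\<in>Bx n. \<Sum>j=0..(\<Sum>i<d. n i). hcoef d c j \<beta> * mon d \<beta> \<zeta>)"
  proof (intro sum.cong refl)
    fix \<beta> assume b: "\<beta> \<in> Bx n"
    have le: "(\<Sum>i<d. \<beta> i) \<le> (\<Sum>i<d. n i)" using b by (intro sum_mono) (auto simp: Bx_def)
    have z: "\<forall>i\<ge>d. \<beta> i = 0" using b nz by (auto simp: Bx_def) (metis le_zero_eq)
    have "(\<Sum>j=0..(\<Sum>i<d. n i). hcoef d c j \<beta> * mon d \<beta> \<zeta>)
        = (\<Sum>j=0..(\<Sum>i<d. n i). if (\<Sum>i<d. \<beta> i) = j then (\<Sum>\<alpha>\<in>Bx n. c \<alpha> * TT d \<alpha> \<beta>) * mon d \<beta> \<zeta> else 0)"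
      by (intro sum.cong refl) (simp add: hcoef_alt[OF sup nz] z)
    also have "\<dots> = (\<Sum>\<alpha>\<in>Bx n. c \<alpha> * TT d \<alpha> \<beta>) * mon d \<beta> \<zeta>"
      by (subst sum.delta') (use le in auto)
    finally show "(\<Sum>\<alpha>\<in>Bx n. c \<alpha> * TT d \<alpha> \<beta>) * mon d \<beta> \<zeta> = (\<Sum>j=0..(\<Sum>i<d. n i). hcoef d c j \<beta> * mon d \<beta> \<zeta>)" by simp
  qed
  also have "\<dots> = (\<Sum>j=0..(\<Sum>i<d. n i). \<Sum>\<beta>\<in>Bx n. hcoef d c j \<beta> * mon d \<beta> \<zeta>)"
    by (rule sum.swap)
  also have "\<dots> = (\<Sum>j=0..(\<Sum>i<d. n i). peval d (hcoef d c j) \<zeta>)"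
    by (intro sum.cong refl peval_superset[symmetric] fin hcoef_supp[OF sup nz])
  finally show ?thesis .
qed



lemma binom_id:
  "g \<le> m \<Longrightarrow> (of_nat ((m - g) choose b) :: int) =
     (\<Sum>l\<le>b. (-1)^l * of_nat (g choose l) * of_nat ((m - l) choose (b - l)))"
proof (induction g arbitrary: m b)
  case 0
  have "(\<Sum>l\<le>b. (-1)^l * of_nat (0 choose l) * of_nat ((m - l) choose (b - l)) :: int)
      = (\<Sum>l\<le>b. if l = 0 then of_nat (m choose b) else 0)"
    by (intro sum.cong refl) auto
  also have "\<dots> = of_nat (m choose b)" by (subst sum.delta) auto
  finally show ?case by simp
next
  case (Suc g)
  then obtain m' where m: "m = Suc m'" by (cases m) auto
  have gm: "g \<le> m'" "g \<le> m" using Suc.prems m by auto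
  show ?case
  proof (cases b)
    case 0
    then show ?thesis by simp
  next
    case (Suc b')
    let ?F = "\<lambda>G l. (-1::int)^l * of_nat (G choose l) * of_nat ((m - l) choose (b - l))"
    have "(\<Sum>l\<le>b. ?F (Suc g) l) = ?F (Suc g) 0 + (\<Sum>k\<le>b'. ?F (Suc g) (Suc k))"
      unfolding Suc by (rule sum.atMost_Suc_shift)
    also have "(\<Sum>k\<le>b'. ?F (Suc g) (Suc k)) = (\<Sum>k\<le>b'. ?F g (Suc k)) - (\<Sum>k\<le>b'. (-1)^k * of_nat (g choose k) * of_nat ((m' - k) choose (b' - k)))"
      unfolding sum_subtractf[symmetric] by (intro sum.cong refl) (simp add: m Suc algebra_simps)
    also have "?F (Suc g) 0 = ?F g 0" by simp
    also have "?F g 0 + ((\<Sum>k\<le>b'. ?F g (Suc k)) - (\<Sum>k\<le>b'. (-1)^k * of_nat (g choose k) * of_nat ((m' - k) choose (b' - k))))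
       = (\<Sum>l\<le>b. ?F g l) - (\<Sum>k\<le>b'. (-1)^k * of_nat (g choose k) * of_nat ((m' - k) choose (b' - k)))"
      unfolding Suc by (subst sum.atMost_Suc_shift) simp
    also have "\<dots> = of_nat ((m - g) choose b) - of_nat ((m' - g) choose b')"
      using Suc.IH[OF gm(2), of b] Suc.IH[OF gm(1), of b'] by simp
    also have "\<dots> = of_nat ((m - Suc g) choose b)"
    proof -
      have "m - g = Suc (m' - g)" using m gm by simp
      hence "(m - g) choose b = ((m' - g) choose b') + ((m' - g) choose b)" using Suc by simp
      thus ?thesis using m by simp
    qed
    finally show ?thesis by simp
  qed
qed

lemma binom_id_c:
  "g \<le> m \<Longrightarrow> (of_nat ((m - g) choose b) :: complex) =
     (\<Sum>l\<le>b. (-1)^l * of_nat (g choose l) * of_nat ((m - l) choose (b - l)))"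
proof -
  assume "g \<le> m"
  from arg_cong[OF binom_id[OF this, of b], where f="of_int :: int \<Rightarrow> complex"]
  show ?thesis by simp
qed

lemma cnj_TT[simp]: "cnj (TT d \<alpha> \<beta>) = TT d \<alpha> \<beta>"
  by (simp add: TT_def)

lemma mdeg_props:
  assumes "is_mpoly d c"
  shows "{\<alpha>. c \<alpha> \<noteq> 0} \<subseteq> Bx (mdeg c)" "\<forall>i\<ge>d. mdeg c i = 0"
proof -
  have fin: "finite {\<alpha>. c \<alpha> \<noteq> 0}" using assms unfolding is_mpoly_def by (rule conjunct1)
  have fin2: "finite ({\<alpha> i | \<alpha>. c \<alpha> \<noteq> 0} \<union> {0})" for i
  proof -
    have "{\<alpha> i | \<alpha>. c \<alpha> \<noteq> 0} = (\<lambda>\<alpha>. \<alpha> i) ` {\<alpha>. c \<alpha> \<noteq> 0}" by auto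
    thus ?thesis using fin by (simp only: finite_Un finite_imageI finite.emptyI finite_insert)
  qed
  show "{\<alpha>. c \<alpha> \<noteq> 0} \<subseteq> Bx (mdeg c)"
  proof (rule subsetI)
    fix \<alpha> assume a: "\<alpha> \<in> {\<alpha>. c \<alpha> \<noteq> 0}"
    have "\<alpha> i \<le> mdeg c i" for i unfolding mdeg_def
    proof (rule Max_ge[OF fin2])
      show "\<alpha> i \<in> {\<alpha> i | \<alpha>. c \<alpha> \<noteq> 0} \<union> {0}" using a by auto
    qed
    thus "\<alpha> \<in> Bx (mdeg c)" unfolding Bx_def by simp
  qed
  show "\<forall>i\<ge>d. mdeg c i = 0"
  proof (intro allI impI)
    fix i assume i: "d \<le> i"
    have A: "\<forall>\<alpha>. c \<alpha> \<noteq> 0 \<longrightarrow> (\<forall>i\<ge>d. \<alpha> i = 0)" using assms unfolding is_mpoly_def by (rule conjunct2)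
    have "{\<alpha> i | \<alpha>. c \<alpha> \<noteq> 0} \<subseteq> {0}"
    proof (rule subsetI)
      fix x assume "x \<in> {\<alpha> i | \<alpha>. c \<alpha> \<noteq> 0}"
      then obtain \<alpha> where "x = \<alpha> i" "c \<alpha> \<noteq> 0" by auto
      thus "x \<in> {0}" using A i by simp
    qed
    hence e: "{\<alpha> i | \<alpha>. c \<alpha> \<noteq> 0} \<union> {0} = {0}" by (rule Un_absorb1)
    show "mdeg c i = 0" unfolding mdeg_def e by simp
  qed
qed

lemma reflect_supp: "{\<alpha>. reflect c \<alpha> \<noteq> 0} \<subseteq> Bx (mdeg c)"
  by (rule subsetI) (simp add: reflect_def Bx_def split: if_splits)

lemma reflect_hcoef:
  assumes sup: "{\<alpha>. c \<alpha> \<noteq> 0} \<subseteq> Bx (mdeg c)" and nz: "\<forall>i\<ge>d. mdeg c i = 0"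
    and van: "\<forall>j<M. \<forall>\<beta>. hcoef d c j \<beta> = 0" and jM: "j \<le> M"
  shows "hcoef d (reflect c) j \<beta> = (if j = M then (-1)^M * cnj (hcoef d c M \<beta>) else 0)"
proof (cases "(\<Sum>i<d. \<beta> i) = j \<and> (\<forall>i\<ge>d. \<beta> i = 0)")
  case False
  thus ?thesis by (auto simp: hcoef_def)
next
  case True
  define n where "n = mdeg c"
  have sup': "{\<alpha>. c \<alpha> \<noteq> 0} \<subseteq> Bx n" and nz': "\<forall>i\<ge>d. n i = 0" using sup nz n_def by auto
  have fin: "finite (Bx n)" using finite_Bx[OF nz'] .
  have nzb: "\<forall>i\<ge>d. \<beta> i = 0" using True by auto
  have finb: "finite (Bx \<beta>)" using finite_Bx[OF nzb] .
  define W where "W \<mu> = (\<Prod>i<d. (-1)^(\<beta> i) * (of_nat ((n i - \<mu> i) choose (\<beta> i - \<mu> i)) :: complex))" for \<mu>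
  have cnjW: "cnj (W \<mu>) = W \<mu>" for \<mu> by (simp add: W_def)
  have TTexp: "TT d (\<lambda>i. n i - \<gamma> i) \<beta> = (\<Sum>\<mu>\<in>Bx \<beta>. W \<mu> * TT d \<gamma> \<mu>)" if g: "\<gamma> \<in> Bx n" for \<gamma>
  proof -
    have "TT d (\<lambda>i. n i - \<gamma> i) \<beta> = (\<Prod>i<d. \<Sum>l\<le>\<beta> i. (-1)^(\<beta> i) * of_nat ((n i - l) choose (\<beta> i - l)) * (of_nat (\<gamma> i choose l) * (-1)^l))"
      unfolding TT_def
    proof (intro prod.cong refl)
      fix i assume "i \<in> {..<d}"
      have "\<gamma> i \<le> n i" using g by (auto simp: Bx_def)
      from binom_id_c[OF this, of "\<beta> i"]
      show "of_nat (n i - \<gamma> i choose \<beta> i) * (- 1) ^ \<beta> i = (\<Sum>l\<le>\<beta> i. (-1)^(\<beta> i) * of_nat ((n i - l) choose (\<beta> i - l)) * (of_nat (\<gamma> i choose l) * (-1)^l :: complex))"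
        by (simp add: sum_distrib_left sum_distrib_right mult_ac)
    qed
    also have "\<dots> = (\<Sum>\<mu>\<in>Bx \<beta>. \<Prod>i<d. (-1)^(\<beta> i) * of_nat ((n i - \<mu> i) choose (\<beta> i - \<mu> i)) * (of_nat (\<gamma> i choose \<mu> i) * (-1)^\<mu> i))"
      by (rule prod_expand[OF nzb])
    also have "\<dots> = (\<Sum>\<mu>\<in>Bx \<beta>. W \<mu> * TT d \<gamma> \<mu>)"
      unfolding W_def TT_def by (simp add: prod.distrib)
    finally show ?thesis .
  qed
  have hc: "(\<Sum>\<gamma>\<in>Bx n. c \<gamma> * TT d \<gamma> \<mu>) = hcoef d c (\<Sum>i<d. \<mu> i) \<mu>" if l: "\<mu> \<in> Bx \<beta>" for \<mu>
  proof -
    have "\<forall>i\<ge>d. \<mu> i = 0" using l nzb by (auto simp: Bx_def) (metis le_zero_eq)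
    thus ?thesis by (simp add: hcoef_alt[OF sup' nz'])
  qed
  have "hcoef d (reflect c) j \<beta> = (\<Sum>\<alpha>\<in>Bx n. reflect c \<alpha> * TT d \<alpha> \<beta>)"
    using hcoef_alt[OF reflect_supp[of c, folded n_def] nz'] True by simp
  also have "\<dots> = (\<Sum>\<alpha>\<in>Bx n. cnj (c (\<lambda>i. n i - \<alpha> i)) * TT d \<alpha> \<beta>)"
    by (intro sum.cong refl) (auto simp: reflect_def Bx_def n_def)
  also have "\<dots> = (\<Sum>\<gamma>\<in>Bx n. cnj (c \<gamma>) * TT d (\<lambda>i. n i - \<gamma> i) \<beta>)"
    by (rule sum.reindex_bij_witness[where i="\<lambda>\<gamma> i. n i - \<gamma> i" and j="\<lambda>\<gamma> i. n i - \<gamma> i"])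
       (auto simp: Bx_def fun_eq_iff)
  also have "\<dots> = (\<Sum>\<gamma>\<in>Bx n. \<Sum>\<mu>\<in>Bx \<beta>. W \<mu> * (cnj (c \<gamma>) * TT d \<gamma> \<mu>))"
    by (intro sum.cong refl) (simp add: TTexp sum_distrib_left mult_ac)
  also have "\<dots> = (\<Sum>\<mu>\<in>Bx \<beta>. W \<mu> * cnj (\<Sum>\<gamma>\<in>Bx n. c \<gamma> * TT d \<gamma> \<mu>))"
    by (subst sum.swap) (simp add: sum_distrib_left)
  also have "\<dots> = (\<Sum>\<mu>\<in>Bx \<beta>. if \<mu> = \<beta> then W \<beta> * cnj (hcoef d c j \<beta>) else 0)"
  proof (intro sum.cong refl)
    fix \<mu> assume l: "\<mu> \<in> Bx \<beta>"
    show "W \<mu> * cnj (\<Sum>\<gamma>\<in>Bx n. c \<gamma> * TT d \<gamma> \<mu>) = (if \<mu> = \<beta> then W \<beta> * cnj (hcoef d c j \<beta>) else 0)"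
    proof (cases "\<mu> = \<beta>")
      case True
      thus ?thesis using hc[OF l] \<open>(\<Sum>i<d. \<beta> i) = j \<and> _\<close> by simp
    next
      case False
      then obtain k where k: "\<mu> k \<noteq> \<beta> k" by auto
      have lk: "\<mu> k < \<beta> k" using k l by (auto simp: Bx_def) (metis le_neq_implies_less)
      hence "k < d" using nzb by (metis not_le not_less0)
      hence "(\<Sum>i<d. \<mu> i) < (\<Sum>i<d. \<beta> i)"
        using l lk by (intro sum_strict_mono_ex1) (auto simp: Bx_def)
      hence "(\<Sum>i<d. \<mu> i) < M" using True jM by simp
      hence "hcoef d c (\<Sum>i<d. \<mu> i) \<mu> = 0" using van by simp
      thus ?thesis using hc[OF l] False by simp
    qed
  qed
  also have "\<dots> = W \<beta> * cnj (hcoef d c j \<beta>)"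
    by (subst sum.delta[OF finb]) (simp add: Bx_def)
  also have "W \<beta> = (-1)^j"
    using True by (simp add: W_def power_sum[symmetric])
  finally have eq: "hcoef d (reflect c) j \<beta> = (-1)^j * cnj (hcoef d c j \<beta>)" .
  show ?thesis
  proof (cases "j = M")
    case True thus ?thesis using eq by simp
  next
    case False
    hence "j < M" using jM by simp
    thus ?thesis using eq van by simp
  qed
qed



lemma line_poly:
  assumes "finite {\<alpha>. a \<alpha> \<noteq> 0}"
  shows "\<exists>q. \<forall>l. peval d a (\<lambda>i. x i + l * v i) = poly q l"
proof
  let ?q = "\<Sum>\<alpha>\<in>{\<alpha>. a \<alpha> \<noteq> 0}. smult (a \<alpha>) (\<Prod>i<d. [:x i, v i:] ^ \<alpha> i)"
  show "\<forall>l. peval d a (\<lambda>i. x i + l * v i) = poly ?q l"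
    by (simp add: peval_def poly_sum poly_prod mult_ac)
qed

lemma real_ratio:
  fixes q :: "complex poly"
  assumes "q \<noteq> 0" "\<forall>z. poly q z = 0 \<longrightarrow> z \<in> \<real>" "s \<in> \<real>" "t \<in> \<real>" "poly q t \<noteq> 0"
  shows "poly q s / poly q t \<in> \<real>"
  using assms
proof (induction "degree q" arbitrary: q rule: less_induct)
  case less
  show ?case
  proof (cases "degree q = 0")
    case True
    then obtain k where "q = [:k:]" by (metis degree_eq_zeroE)
    thus ?thesis using less.prems by simp
  next
    case False
    hence "\<not> constant (poly q)" by (simp add: constant_degree)
    then obtain r where r: "poly q r = 0" using Fundamental_Theorem_Algebra.fundamental_theorem_of_algebra by blast
    hence rR: "r \<in> \<real>" using less.prems by blast
    from r obtain q' where q: "q = [:-r, 1:] * q'" by (metis poly_eq_0_iff_dvd dvdE)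
    have q'0: "q' \<noteq> 0" using less.prems(1) q by auto
    have d1: "degree ([:-r,1:] * q') = degree [:-r,1:] + degree q'" by (rule degree_mult_eq) (use q'0 in auto)
    have deg: "degree q' < degree q" unfolding q d1 by simp
    have roots: "\<forall>z. poly q' z = 0 \<longrightarrow> z \<in> \<real>" using less.prems(2) q by auto
    have t: "poly q' t \<noteq> 0" "t - r \<noteq> 0" using less.prems(5) q by auto
    have IH: "poly q' s / poly q' t \<in> \<real>"
      using less.hyps[OF deg q'0 roots less.prems(3,4) t(1)] .
    have ps: "poly q x = (x - r) * poly q' x" for x unfolding q by (simp add: algebra_simps)
    have "poly q s / poly q t = ((s - r) / (t - r)) * (poly q' s / poly q' t)"
      unfolding ps by (simp only: times_divide_times_eq)
    moreover have "(s - r) / (t - r) \<in> \<real>" using rR less.prems(3,4) by (intro Reals_divide Reals_diff)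
    ultimately show ?thesis using IH by (metis Reals_mult)
  qed
qed

lemma hom:
  "peval d (hcoef d c j) (\<lambda>i. t * w i) = t ^ j * peval d (hcoef d c j) w"
proof -
  have "hcoef d c j \<alpha> * (\<Prod>i<d. (t * w i) ^ \<alpha> i) = t ^ j * (hcoef d c j \<alpha> * (\<Prod>i<d. w i ^ \<alpha> i))"
    if "\<alpha> \<in> {\<alpha>. hcoef d c j \<alpha> \<noteq> 0}" for \<alpha>
  proof -
    have "(\<Sum>i<d. \<alpha> i) = j" using that by (auto simp: hcoef_def split: if_splits)
    moreover have "(\<Prod>i<d. t ^ \<alpha> i) = t ^ (\<Sum>i<d. \<alpha> i)" by (rule power_sum[symmetric])
    ultimately have tj: "(\<Prod>i<d. t ^ \<alpha> i) = t ^ j" by simp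
    have "(\<Prod>i<d. (t * w i) ^ \<alpha> i) = t ^ j * (\<Prod>i<d. w i ^ \<alpha> i)"
      unfolding power_mult_distrib prod.distrib tj ..
    thus ?thesis by (simp only: mult_ac)
  qed
  hence "(\<Sum>\<alpha>\<in>{\<alpha>. hcoef d c j \<alpha> \<noteq> 0}. hcoef d c j \<alpha> * (\<Prod>i<d. (t * w i) ^ \<alpha> i))
     = (\<Sum>\<alpha>\<in>{\<alpha>. hcoef d c j \<alpha> \<noteq> 0}. t ^ j * (hcoef d c j \<alpha> * (\<Prod>i<d. w i ^ \<alpha> i)))"
    by (rule sum.cong[OF refl])
  thus ?thesis unfolding peval_def by (simp only: sum_distrib_left)
qed



lemma inf_roots:
  fixes q :: "complex poly"
  assumes "\<And>m::nat. poly q (of_nat m) = 0"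
  shows "q = 0"
proof (rule ccontr)
  assume "q \<noteq> 0"
  hence "finite {x. poly q x = 0}" by (rule poly_roots_finite)
  moreover have "range (of_nat :: nat \<Rightarrow> complex) \<subseteq> {x. poly q x = 0}" using assms by auto
  ultimately have "finite (range (of_nat :: nat \<Rightarrow> complex))" by (rule finite_subset[rotated])
  hence "finite (UNIV :: nat set)" using finite_imageD inj_of_nat by blast
  thus False by simp
qed

lemma Z:
  fixes a :: "(nat\<Rightarrow>nat) \<Rightarrow> complex"
  assumes "\<forall>i\<ge>d. n i = 0" "\<forall>y::nat\<Rightarrow>real. (\<Sum>\<beta>\<in>Bx n. a \<beta> * mon d \<beta> (\<lambda>i. of_real (y i))) = 0"
  shows "\<forall>\<beta>\<in>Bx n. a \<beta> = 0"
  using assms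
proof (induction d arbitrary: n a)
  case 0
  have "Bx n = {\<lambda>_. 0}" using 0 by (auto simp: Bx_def fun_eq_iff)
  moreover have "(\<Sum>\<beta>\<in>Bx n. a \<beta> * mon 0 \<beta> (\<lambda>i. of_real (0::real))) = 0" using 0(2)[rule_format, of "\<lambda>_. 0"] by simp
  ultimately show ?case by (simp add: mon_def)
next
  case (Suc d)
  define n' where "n' = n(d := 0)"
  have nz': "\<forall>i\<ge>d. n' i = 0" using Suc.prems(1) by (auto simp: n'_def)
  have fin': "finite (Bx n')" using finite_Bx[OF nz'] .
  have split: "(\<Sum>\<beta>\<in>Bx n. F \<beta>) = (\<Sum>k\<le>n d. \<Sum>\<beta>'\<in>Bx n'. F (\<beta>'(d:=k)))" for F :: "(nat\<Rightarrow>nat) \<Rightarrow> complex"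
  proof -
    have "(\<Sum>k\<le>n d. \<Sum>\<beta>'\<in>Bx n'. F (\<beta>'(d:=k))) = (\<Sum>(k,\<beta>')\<in>{..n d} \<times> Bx n'. F (\<beta>'(d:=k)))"
      by (rule sum.cartesian_product)
    also have "\<dots> = (\<Sum>\<beta>\<in>Bx n. F \<beta>)"
      by (rule sum.reindex_bij_witness[where i="\<lambda>\<beta>. (\<beta> d, \<beta>(d:=0))" and j="\<lambda>(k,\<beta>'). \<beta>'(d:=k)"])
         (auto simp: Bx_def n'_def fun_eq_iff, metis le_zero_eq, metis)
    finally show ?thesis by simp
  qed
  have mon_split: "mon (Suc d) (\<beta>'(d:=k)) y = y d ^ k * mon d \<beta>' y" for \<beta>' k y
  proof -
    have "(\<Prod>i<d. y i ^ (\<beta>'(d:=k)) i) = (\<Prod>i<d. y i ^ \<beta>' i)" by (intro prod.cong) auto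
    thus ?thesis unfolding mon_def by (simp add: mult.commute)
  qed
  have mon_upd: "mon d \<beta>' (\<lambda>i. of_real ((y(d:=s)) i)) = mon d \<beta>' (\<lambda>i. of_real (y i))" for \<beta>' y s
    unfolding mon_def by (intro prod.cong) auto
  define B where "B k y = (\<Sum>\<beta>'\<in>Bx n'. a (\<beta>'(d:=k)) * mon d \<beta>' (\<lambda>i. of_real (y i)))" for k y
  have B0: "B k y = 0" if k: "k \<le> n d" for k y
  proof -
    let ?q = "\<Sum>k'\<le>n d. monom (B k' y) k'"
    have "poly ?q (of_real s) = 0" for s :: real
    proof -
      let ?y = "y(d := s)"
      have By: "B k' ?y = B k' y" for k' unfolding B_def mon_upd ..
      have "0 = (\<Sum>\<beta>\<in>Bx n. a \<beta> * mon (Suc d) \<beta> (\<lambda>i. of_real (?y i)))" using Suc.prems(2) by metis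
      also have "\<dots> = (\<Sum>k'\<le>n d. \<Sum>\<beta>'\<in>Bx n'. a (\<beta>'(d:=k')) * mon (Suc d) (\<beta>'(d:=k')) (\<lambda>i. of_real (?y i)))"
        by (rule split)
      also have "\<dots> = (\<Sum>k'\<le>n d. of_real s ^ k' * B k' ?y)"
        unfolding mon_split B_def by (simp add: sum_distrib_left mult_ac)
      also have "\<dots> = poly ?q (of_real s)"
        by (simp add: poly_sum poly_monom By mult.commute)
      finally show ?thesis by simp
    qed
    hence "poly ?q (of_nat m) = 0" for m :: nat by (metis of_real_of_nat_eq)
    hence "?q = 0" by (rule inf_roots)
    hence "coeff ?q k = 0" by simp
    moreover have "coeff ?q k = B k y" by (simp add: coeff_sum k)
    ultimately show ?thesis by simp
  qed
  have A0: "\<forall>\<beta>'\<in>Bx n'. a (\<beta>'(d:=k)) = 0" if "k \<le> n d" for k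
    using Suc.IH[OF nz', of "\<lambda>\<beta>'. a (\<beta>'(d:=k))"] B0[OF that] unfolding B_def by blast
  show ?case
  proof
    fix \<beta> assume b: "\<beta> \<in> Bx n"
    have "\<beta>(d:=0) \<in> Bx n'" "\<beta> d \<le> n d" using b by (auto simp: Bx_def n'_def)
    hence "a ((\<beta>(d:=0))(d := \<beta> d)) = 0" using A0 by blast
    thus "a \<beta> = 0" by simp
  qed
qed



lemma expandM:
  assumes sup: "{\<alpha>. c \<alpha> \<noteq> 0} \<subseteq> Bx n" and nz: "\<forall>i\<ge>d. n i = 0"
    and van0: "\<forall>j<M. \<forall>\<beta>. hcoef d c j \<beta> = 0"
  shows "peval d c (\<lambda>i. 1 - \<zeta> i) = (\<Sum>j=M..(\<Sum>i<d. n i). peval d (hcoef d c j) \<zeta>)"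
proof -
  have "peval d c (\<lambda>i. 1 - \<zeta> i) = (\<Sum>j=0..(\<Sum>i<d. n i). peval d (hcoef d c j) \<zeta>)"
    by (rule expand[OF sup nz])
  also have "\<dots> = (\<Sum>j=M..(\<Sum>i<d. n i). peval d (hcoef d c j) \<zeta>)"
  proof (rule sum.mono_neutral_right)
    show "\<forall>j\<in>{0..\<Sum>i<d. n i} - {M..\<Sum>i<d. n i}. peval d (hcoef d c j) \<zeta> = 0"
    proof
      fix j assume "j \<in> {0..\<Sum>i<d. n i} - {M..\<Sum>i<d. n i}"
      hence "j < M" by auto
      hence "hcoef d c j = (\<lambda>_. 0)" using van0 by auto
      thus "peval d (hcoef d c j) \<zeta> = 0" by (simp add: peval_def)
    qed
  qed auto
  finally show ?thesis .
qed

lemma disk_est: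
  fixes t \<delta> R :: real and z :: complex
  assumes "0 < t" "0 < \<delta>" "\<delta> \<le> Re z" "cmod z \<le> R" "t * R^2 \<le> \<delta>"
  shows "cmod (1 - of_real t * z) < 1"
proof -
  have e1: "(cmod (1 - of_real t * z))^2 = (1 - t * Re z)^2 + (t * Im z)^2" by (simp add: cmod_power2)
  have e2: "(cmod z)^2 = (Re z)^2 + (Im z)^2" by (simp add: cmod_power2)
  have "(cmod z)^2 \<le> R^2" using assms(4) by (intro power_mono) auto
  hence "t * ((Re z)^2 + (Im z)^2) \<le> \<delta>" using e2 assms(1,5) by (metis dual_order.trans mult_left_mono less_imp_le)
  hence "t * (t * ((Re z)^2 + (Im z)^2)) \<le> t * \<delta>" using assms(1) by (intro mult_left_mono) auto
  moreover have "(1 - t * Re z)^2 + (t * Im z)^2 = 1 - 2 * t * Re z + t * (t * ((Re z)^2 + (Im z)^2))"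
    by (simp add: power2_eq_square algebra_simps)
  moreover have "t * \<delta> \<le> t * Re z" using assms by (intro mult_left_mono) auto
  moreover have "0 < t * \<delta>" using assms by simp
  ultimately have "(cmod (1 - of_real t * z))^2 < 1" using e1 by linarith
  thus ?thesis by (metis abs_norm_cancel abs_square_less_1)
qed



lemma B1:
  assumes mp: "is_mpoly d c"
    and st: "\<forall>z. (\<forall>i<d. norm (z i) < 1) \<longrightarrow> peval d c z \<noteq> 0"
    and van: "vanishes_to_order d c M"
    and wpos: "\<forall>i<d. 0 < Re (w i)"
  shows "peval d (hcoef d c M) w \<noteq> 0"
proof
  assume Pw: "peval d (hcoef d c M) w = 0"
  define n where "n = mdeg c"
  have sup: "{\<alpha>. c \<alpha> \<noteq> 0} \<subseteq> Bx n" and nz: "\<forall>i\<ge>d. n i = 0" using mdeg_props[OF mp] n_def by auto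
  have fin: "finite (Bx n)" using finite_Bx[OF nz] .
  have van0: "\<forall>j<M. \<forall>\<beta>. hcoef d c j \<beta> = 0" using van by (simp add: vanishes_to_order_def)
  obtain \<beta>0 where b0: "hcoef d c M \<beta>0 \<noteq> 0" using van by (auto simp: vanishes_to_order_def)
  have hsup: "{\<beta>. hcoef d c j \<beta> \<noteq> 0} \<subseteq> Bx n" for j by (rule hcoef_supp[OF sup nz])
  have hfin: "finite {\<beta>. hcoef d c j \<beta> \<noteq> 0}" for j using hsup fin by (rule finite_subset)
  define N where "N = (\<Sum>i<d. n i)"
  define P where "P j z = peval d (hcoef d c j) z" for j z
  have b0B: "\<beta>0 \<in> Bx n" using hsup b0 by auto
  have MN: "M \<le> N"
  proof -
    have "(\<Sum>i<d. \<beta>0 i) = M" using b0 by (auto simp: hcoef_def split: if_splits)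
    moreover have "(\<Sum>i<d. \<beta>0 i) \<le> N" unfolding N_def using b0B by (intro sum_mono) (auto simp: Bx_def)
    ultimately show ?thesis by simp
  qed
  obtain y :: "nat \<Rightarrow> real" where Py: "P M (\<lambda>i. of_real (y i)) \<noteq> 0"
  proof -
    have "\<exists>y::nat\<Rightarrow>real. P M (\<lambda>i. of_real (y i)) \<noteq> 0"
    proof (rule ccontr)
      assume "\<not> (\<exists>y::nat\<Rightarrow>real. P M (\<lambda>i. of_real (y i)) \<noteq> 0)"
      hence "\<forall>y::nat\<Rightarrow>real. (\<Sum>\<beta>\<in>Bx n. hcoef d c M \<beta> * mon d \<beta> (\<lambda>i. of_real (y i))) = 0"
        unfolding P_def using peval_superset[OF fin hsup] by auto
      hence "\<forall>\<beta>\<in>Bx n. hcoef d c M \<beta> = 0" by (rule Z[OF nz])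
      thus False using b0 b0B by auto
    qed
    thus ?thesis using that by blast
  qed
  define v where "v i = of_real (y i) - w i" for i
  define g where "g l = P M (\<lambda>i. w i + l * v i)" for l
  obtain q where q: "\<forall>l. g l = poly q l" using line_poly[OF hfin[of M], where x=w and v=v and d=d] unfolding g_def P_def by blast
  have g1: "g 1 \<noteq> 0" using Py unfolding g_def v_def by simp
  have g0: "g 0 = 0" using Pw unfolding g_def P_def by simp
  define \<delta> where "\<delta> = Min (insert 1 ((\<lambda>i. Re (w i) / 2) ` {..<d}))"
  have \<delta>pos: "0 < \<delta>" unfolding \<delta>_def using wpos by (subst Min_gr_iff) auto
  have \<delta>le: "\<delta> \<le> Re (w i) / 2" if "i < d" for i unfolding \<delta>_def using that by (intro Min_le) auto
  have \<delta>1: "\<delta> \<le> 1" unfolding \<delta>_def by (intro Min_le) auto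
  define V where "V = 1 + (\<Sum>i<d. cmod (v i))"
  have V1: "1 \<le> V" unfolding V_def by (simp add: sum_nonneg)
  have Vle: "cmod (v i) \<le> V" if "i < d" for i
  proof -
    have "cmod (v i) \<le> (\<Sum>i<d. cmod (v i))" using that by (intro member_le_sum) auto
    thus ?thesis unfolding V_def by simp
  qed
  define R where "R = 1 + (\<Sum>i<d. cmod (w i)) + \<delta>"
  have R1: "1 \<le> R" unfolding R_def using \<delta>pos by (simp add: sum_nonneg)
  have Wle: "cmod (w i) \<le> (\<Sum>i<d. cmod (w i))" if "i < d" for i using that by (intro member_le_sum) auto
  define r where "r = \<delta> / V"
  have rpos: "0 < r" unfolding r_def using \<delta>pos V1 by simp
  define S where "S = ball (0::complex) r"
  have zS: "\<delta> \<le> Re (w i + l * v i) \<and> cmod (w i + l * v i) \<le> R" if "l \<in> S" "i < d" for l i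
  proof -
    have "cmod l * cmod (v i) \<le> r * V"
      using that Vle[OF that(2)] rpos by (intro mult_mono) (auto simp: S_def)
    hence lv: "cmod (l * v i) \<le> \<delta>" unfolding r_def norm_mult using V1 by simp
    have "Re (w i + l * v i) \<ge> Re (w i) - cmod (l * v i)" using abs_Re_le_cmod[of "l * v i"] by simp
    hence "Re (w i + l * v i) \<ge> \<delta>" using lv \<delta>le[OF that(2)] by linarith
    moreover have "cmod (w i + l * v i) \<le> cmod (w i) + cmod (l * v i)" by (rule norm_triangle_ineq)
    hence "cmod (w i + l * v i) \<le> R" using lv Wle[OF that(2)] unfolding R_def by linarith
    ultimately show ?thesis by simp
  qed
  define t0 where "t0 = \<delta> / R^2"
  have R2: "1 \<le> R^2" using R1 by (simp add: one_le_power)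
  have t0pos: "0 < t0" unfolding t0_def using \<delta>pos R1 by simp
  have t01: "t0 \<le> 1" unfolding t0_def using \<delta>1 R2 by (simp add: divide_le_eq_1)
  have t0R: "t0 * R^2 = \<delta>" unfolding t0_def using R1 by simp
  define tn where "tn k = t0 / real (Suc k)" for k
  have tnpos: "0 < tn k" for k unfolding tn_def using t0pos by simp
  have tnle: "tn k \<le> t0" for k unfolding tn_def using t0pos by (simp add: divide_le_eq field_simps)
  have tn1: "tn k \<le> 1" for k using tnle[of k] t01 by simp
  have tnR: "tn k * R^2 \<le> \<delta>" for k using tnle[of k] t0R R2 by (metis mult_right_mono zero_le_power2)
  define F where "F k l = peval d c (\<lambda>i. 1 - of_real (tn k) * (w i + l * v i)) / of_real (tn k) ^ M" for k l
  have stz: "(\<forall>i<d. norm (z i) < 1) \<Longrightarrow> peval d c z \<noteq> 0" for z using st by blast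
  have Fnz: "F k l \<noteq> 0" if "l \<in> S" for k l
  proof -
    have "\<forall>i<d. cmod (1 - of_real (tn k) * (w i + l * v i)) < 1"
    proof (intro allI impI)
      fix i assume "i < d"
      from zS[OF that this] show "cmod (1 - of_real (tn k) * (w i + l * v i)) < 1"
        using disk_est[OF tnpos \<delta>pos _ _ tnR] by blast
    qed
    hence "peval d c (\<lambda>i. 1 - of_real (tn k) * (w i + l * v i)) \<noteq> 0"
      by (rule stz)
    thus ?thesis unfolding F_def using tnpos[of k] by simp
  qed
  have Frep: "F k l = g l + (\<Sum>j\<in>{Suc M..N}. of_real (tn k) ^ (j - M) * P j (\<lambda>i. w i + l * v i))" for k l
  proof -
    let ?t = "of_real (tn k) :: complex"
    let ?z = "\<lambda>i. w i + l * v i"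
    have "peval d c (\<lambda>i. 1 - ?t * ?z i) = (\<Sum>j=M..N. P j (\<lambda>i. ?t * ?z i))"
      unfolding N_def P_def by (rule expandM[OF sup nz van0])
    also have "\<dots> = (\<Sum>j=M..N. ?t ^ j * P j ?z)" unfolding P_def by (intro sum.cong refl hom)
    finally have e: "peval d c (\<lambda>i. 1 - ?t * ?z i) = (\<Sum>j=M..N. ?t ^ j * P j ?z)" .
    have tnz: "?t \<noteq> 0" using tnpos[of k] by simp
    have "F k l = (\<Sum>j=M..N. ?t ^ j * P j ?z) / ?t ^ M" unfolding F_def e ..
    also have "\<dots> = (\<Sum>j=M..N. ?t ^ (j - M) * P j ?z)"
      unfolding sum_divide_distrib
    proof (intro sum.cong refl)
      fix j assume "j \<in> {M..N}"
      hence "?t ^ j = ?t ^ M * ?t ^ (j - M)" by (simp add: power_add[symmetric])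
      thus "?t ^ j * P j ?z / ?t ^ M = ?t ^ (j - M) * P j ?z" using tnz by simp
    qed
    also have "\<dots> = P M ?z + (\<Sum>j\<in>{Suc M..N}. ?t ^ (j - M) * P j ?z)"
      by (subst sum.atLeast_Suc_atMost[OF MN]) simp
    finally show ?thesis unfolding g_def .
  qed
  have holF: "F k holomorphic_on S" for k
    unfolding F_def peval_def by (intro holomorphic_intros) (use tnpos in auto)
  have holg: "g holomorphic_on S"
    unfolding g_def P_def peval_def by (intro holomorphic_intros)
  have ul: "uniform_limit K F g sequentially" if K: "compact K" "K \<subseteq> S" for K
  proof -
    define G where "G l = (\<Sum>j\<in>{Suc M..N}. cmod (P j (\<lambda>i. w i + l * v i)))" for l
    have "continuous_on K G" unfolding G_def P_def peval_def by (intro continuous_intros)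
    hence "bounded (G ` K)" by (intro compact_imp_bounded compact_continuous_image K(1))
    then obtain C where C: "C > 0" "\<forall>x\<in>G ` K. norm x \<le> C" by (auto simp: bounded_pos)
    have GC: "G l \<le> C" if "l \<in> K" for l using C(2) that by fastforce
    have est: "dist (F k l) (g l) \<le> tn k * C" if "l \<in> K" for k l
    proof -
      have "dist (F k l) (g l) = cmod (\<Sum>j\<in>{Suc M..N}. of_real (tn k) ^ (j - M) * P j (\<lambda>i. w i + l * v i))"
        unfolding Frep dist_norm by simp
      also have "\<dots> \<le> (\<Sum>j\<in>{Suc M..N}. cmod (of_real (tn k) ^ (j - M) * P j (\<lambda>i. w i + l * v i)))"
        by (rule norm_sum)
      also have "\<dots> \<le> (\<Sum>j\<in>{Suc M..N}. tn k * cmod (P j (\<lambda>i. w i + l * v i)))"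
      proof (intro sum_mono)
        fix j assume "j \<in> {Suc M..N}"
        hence "tn k ^ (j - M) \<le> tn k ^ 1" using tnpos[of k] tn1[of k] by (intro power_decreasing) auto
        thus "cmod (of_real (tn k) ^ (j - M) * P j (\<lambda>i. w i + l * v i)) \<le> tn k * cmod (P j (\<lambda>i. w i + l * v i))"
          unfolding norm_mult norm_power norm_of_real using tnpos[of k] by (intro mult_right_mono) auto
      qed
      also have "\<dots> = tn k * G l" unfolding G_def by (simp add: sum_distrib_left)
      also have "\<dots> \<le> tn k * C" using GC[OF that] tnpos[of k] by (intro mult_left_mono) auto
      finally show ?thesis .
    qed
    have lim: "(\<lambda>k. tn k * C) \<longlonglongrightarrow> 0"
    proof -
      have "(\<lambda>k. t0 * C * inverse (real (Suc k))) \<longlonglongrightarrow> t0 * C * 0"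
        by (intro tendsto_mult tendsto_const LIMSEQ_inverse_real_of_nat)
      thus ?thesis unfolding tn_def by (simp add: field_simps)
    qed
    show ?thesis
    proof (rule uniform_limitI)
      fix e :: real assume "e > 0"
      from order_tendstoD(2)[OF lim this] have "\<forall>\<^sub>F k in sequentially. tn k * C < e" .
      thus "\<forall>\<^sub>F k in sequentially. \<forall>l\<in>K. dist (F k l) (g l) < e"
        by (rule eventually_mono) (auto intro: le_less_trans[OF est])
    qed
  qed
  have nonconst: "\<not> g constant_on S"
  proof
    assume "g constant_on S"
    then obtain k where k: "\<forall>l\<in>S. g l = k" unfolding constant_on_def by blast
    have "0 \<in> S" unfolding S_def using rpos by simp
    hence k0: "k = 0" using k g0 by auto
    have q0: "q \<noteq> 0" using g1 q by auto
    have "S \<subseteq> {x. poly q x = 0}" using k k0 q by auto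
    hence "finite S" using poly_roots_finite[OF q0] by (rule finite_subset)
    hence "S = {}" using finite_imp_not_open[of S] unfolding S_def by auto
    thus False using \<open>0 \<in> S\<close> by auto
  qed
  have "g 0 \<noteq> 0"
    by (rule Hurwitz_no_zeros[of S F g 0]) (use holF holg ul nonconst Fnz rpos in \<open>auto simp: S_def\<close>)
  thus False using g0 by simp
qed



lemma B2_line:
  fixes a b :: "nat \<Rightarrow> real" and s t :: real
  assumes mp: "is_mpoly d c"
    and st: "\<forall>z. (\<forall>i<d. norm (z i) < 1) \<longrightarrow> peval d c z \<noteq> 0"
    and van: "vanishes_to_order d c M"
    and bpos: "\<forall>i<d. 0 < b i"
    and nt: "peval d (hcoef d c M) (\<lambda>i. of_real (a i) + of_real t * of_real (b i)) \<noteq> 0"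
  shows "peval d (hcoef d c M) (\<lambda>i. of_real (a i) + of_real s * of_real (b i)) /
         peval d (hcoef d c M) (\<lambda>i. of_real (a i) + of_real t * of_real (b i)) \<in> \<real>"
proof -
  define P where "P z = peval d (hcoef d c M) z" for z
  have sup: "{\<alpha>. c \<alpha> \<noteq> 0} \<subseteq> Bx (mdeg c)" and nz: "\<forall>i\<ge>d. mdeg c i = 0" using mdeg_props[OF mp] by auto
  have hfin: "finite {\<beta>. hcoef d c M \<beta> \<noteq> 0}"
    using hcoef_supp[OF sup nz] finite_Bx[OF nz] by (rule finite_subset)
  define L where "L z = (\<lambda>i. of_real (a i) + z * of_real (b i) :: complex)" for z
  obtain q where q: "\<forall>z. P (L z) = poly q z"
    using line_poly[OF hfin, where x="\<lambda>i. of_real (a i)" and v="\<lambda>i. of_real (b i)" and d=d]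
    unfolding P_def L_def by blast
  have B1': "P w \<noteq> 0" if "\<forall>i<d. 0 < Re (w i)" for w
    unfolding P_def by (rule B1[OF mp st van that])
  have roots: "\<forall>z. poly q z = 0 \<longrightarrow> z \<in> \<real>"
  proof (intro allI impI)
    fix z assume z0: "poly q z = 0"
    show "z \<in> \<real>"
    proof (rule ccontr)
      assume "z \<notin> \<real>"
      hence Imz: "Im z \<noteq> 0" using complex_is_Real_iff by blast
      have ImL: "Im (L z i) = Im z * b i" for i unfolding L_def by simp
      show False
      proof (cases "Im z > 0")
        case True
        have "\<forall>i<d. 0 < Re ((\<lambda>i. (- \<i>) * L z i) i)" using ImL True bpos by simp
        hence "P (\<lambda>i. (- \<i>) * L z i) \<noteq> 0" by (rule B1')
        moreover have "P (\<lambda>i. (- \<i>) * L z i) = (- \<i>) ^ M * P (L z)" unfolding P_def by (rule hom)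
        ultimately show False using q z0 by simp
      next
        case False
        hence "Im z < 0" using Imz by simp
        hence "\<forall>i<d. 0 < Re ((\<lambda>i. \<i> * L z i) i)" using ImL bpos by (simp add: mult_neg_pos)
        hence "P (\<lambda>i. \<i> * L z i) \<noteq> 0" by (rule B1')
        moreover have "P (\<lambda>i. \<i> * L z i) = \<i> ^ M * P (L z)" unfolding P_def by (rule hom)
        ultimately show False using q z0 by simp
      qed
    qed
  qed
  have qt: "poly q (of_real t) \<noteq> 0" using nt q unfolding P_def L_def by metis
  hence q0: "q \<noteq> 0" by auto
  have "poly q (of_real s) / poly q (of_real t) \<in> \<real>"
    by (rule real_ratio[OF q0 roots _ _ qt]) auto
  thus ?thesis using q unfolding P_def L_def by metis
qed



lemma imr: "Im (w * complex_of_real r) = Im w * r" by simp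

lemma realP:
  assumes mp: "is_mpoly d c"
    and st: "\<forall>z. (\<forall>i<d. norm (z i) < 1) \<longrightarrow> peval d c z \<noteq> 0"
    and van: "vanishes_to_order d c M"
  shows "\<exists>\<nu>. norm \<nu> = 1 \<and> (\<forall>\<beta>. \<nu> * hcoef d c M \<beta> \<in> \<real>)"
proof -
  define P where "P z = peval d (hcoef d c M) z" for z
  have B1': "P w \<noteq> 0" if "\<forall>i<d. 0 < Re (w i)" for w
    unfolding P_def by (rule B1[OF mp st van that])
  have line: "P (\<lambda>i. of_real (a i) + of_real s * of_real (b i)) / P (\<lambda>i. of_real (a i) + of_real t * of_real (b i)) \<in> \<real>"
    if "\<forall>i<d. 0 < b i" "P (\<lambda>i. of_real (a i) + of_real t * of_real (b i)) \<noteq> 0" for a b :: "nat \<Rightarrow> real" and s t :: real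
    using B2_line[OF mp st van that(1) that(2)[unfolded P_def]] unfolding P_def .
  define E where "E = (\<lambda>i::nat. 1::complex)"
  have PE: "P E \<noteq> 0" by (rule B1') (simp add: E_def)
  have ratio: "P (\<lambda>i. of_real (y i)) / P E \<in> \<real>" for y :: "nat \<Rightarrow> real"
  proof -
    define T where "T = 1 + (\<Sum>i<d. \<bar>y i\<bar>)"
    define x where "x i = y i + T" for i
    have xpos: "\<forall>i<d. 0 < x i"
    proof (intro allI impI)
      fix i assume "i < d"
      hence "\<bar>y i\<bar> \<le> (\<Sum>i<d. \<bar>y i\<bar>)" by (intro member_le_sum) auto
      thus "0 < x i" unfolding x_def T_def by linarith
    qed
    define X where "X = (\<lambda>i. of_real (x i) :: complex)"
    define XE where "XE = (\<lambda>i. of_real (x i) + 1 :: complex)"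
    have PX: "P X \<noteq> 0" by (rule B1') (use xpos in \<open>simp add: X_def\<close>)
    have PXE: "P XE \<noteq> 0" by (rule B1') (use xpos in \<open>simp add: XE_def add_pos_pos\<close>)
    have one: "\<forall>i<d. 0 < (1::real)" by simp
    have r1: "P (\<lambda>i. of_real (y i)) / P X \<in> \<real>"
    proof -
      have e1: "(\<lambda>i. of_real (y i) + of_real T * of_real 1) = X" by (simp add: X_def x_def fun_eq_iff)
      have e0: "(\<lambda>i. of_real (y i) + of_real 0 * of_real 1) = (\<lambda>i. of_real (y i) :: complex)" by simp
      from line[of "\<lambda>_. 1" y T 0] show ?thesis unfolding e1 e0 using one PX by simp
    qed
    have r2: "P X / P XE \<in> \<real>"
    proof -
      have e1: "(\<lambda>i. of_real (x i) + of_real 1 * of_real 1) = XE" by (simp add: XE_def fun_eq_iff)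
      have e0: "(\<lambda>i. of_real (x i) + of_real 0 * of_real 1) = X" by (simp add: X_def)
      from line[of "\<lambda>_. 1" x 1 0] show ?thesis unfolding e1 e0 using one PXE by simp
    qed
    have r3: "P E / P XE \<in> \<real>"
    proof -
      have e1: "(\<lambda>i. of_real 1 + of_real 1 * of_real (x i)) = XE" by (simp add: XE_def fun_eq_iff)
      have e0: "(\<lambda>i. of_real 1 + of_real 0 * of_real (x i)) = E" by (simp add: E_def)
      from line[of x "\<lambda>_. 1" 1 0] show ?thesis unfolding e1 e0 using xpos PXE by simp
    qed
    have "P (\<lambda>i. of_real (y i)) / P E = (P (\<lambda>i. of_real (y i)) / P X) * (P X / P XE) / (P E / P XE)"
      using PX PXE PE by (simp add: field_simps)
    thus ?thesis using r1 r2 r3 by (metis Reals_mult Reals_divide)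
  qed
  define \<nu> where "\<nu> = cnj (P E) / of_real (cmod (P E))"
  have n1: "norm \<nu> = 1" unfolding \<nu>_def using PE by (simp add: norm_divide)
  have nuR: "\<nu> * P (\<lambda>i. of_real (y i)) \<in> \<real>" for y :: "nat \<Rightarrow> real"
  proof -
    have "cnj (P E) = of_real ((cmod (P E))^2) / P E" using PE by (subst complex_norm_square) simp
    hence "\<nu> * P (\<lambda>i. of_real (y i)) = of_real (cmod (P E)) * (P (\<lambda>i. of_real (y i)) / P E)"
      unfolding \<nu>_def using PE by (simp add: field_simps power2_eq_square)
    thus ?thesis using ratio[of y] by (metis Reals_mult Reals_of_real)
  qed
  define n where "n = mdeg c"
  have sup: "{\<alpha>. c \<alpha> \<noteq> 0} \<subseteq> Bx n" and nz: "\<forall>i\<ge>d. n i = 0" using mdeg_props[OF mp] n_def by auto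
  have fin: "finite (Bx n)" using finite_Bx[OF nz] .
  have hsup: "{\<beta>. hcoef d c M \<beta> \<noteq> 0} \<subseteq> Bx n" by (rule hcoef_supp[OF sup nz])
  define a where "a \<beta> = (of_real (Im (\<nu> * hcoef d c M \<beta>)) :: complex)" for \<beta>
  have monR: "mon d \<beta> (\<lambda>i. of_real (y i)) = of_real (\<Prod>i<d. y i ^ \<beta> i)" for \<beta> and y :: "nat \<Rightarrow> real"
    unfolding mon_def by simp
  have "\<forall>y::nat\<Rightarrow>real. (\<Sum>\<beta>\<in>Bx n. a \<beta> * mon d \<beta> (\<lambda>i. of_real (y i))) = 0"
  proof
    fix y :: "nat \<Rightarrow> real"
    have "\<nu> * P (\<lambda>i. of_real (y i)) = (\<Sum>\<beta>\<in>Bx n. \<nu> * hcoef d c M \<beta> * of_real (\<Prod>i<d. y i ^ \<beta> i))"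
      unfolding P_def peval_superset[OF fin hsup] monR by (simp add: sum_distrib_left mult_ac)
    hence "Im (\<nu> * P (\<lambda>i. of_real (y i))) = (\<Sum>\<beta>\<in>Bx n. Im (\<nu> * hcoef d c M \<beta> * of_real (\<Prod>i<d. y i ^ \<beta> i)))"
      by (simp only: Im_sum)
    also have "\<dots> = (\<Sum>\<beta>\<in>Bx n. Im (\<nu> * hcoef d c M \<beta>) * (\<Prod>i<d. y i ^ \<beta> i))"
      by (intro sum.cong refl imr)
    moreover have "Im (\<nu> * P (\<lambda>i. of_real (y i))) = 0" using nuR[of y] complex_is_Real_iff by blast
    ultimately have "(\<Sum>\<beta>\<in>Bx n. Im (\<nu> * hcoef d c M \<beta>) * (\<Prod>i<d. y i ^ \<beta> i)) = 0" by simp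
    hence "of_real (\<Sum>\<beta>\<in>Bx n. Im (\<nu> * hcoef d c M \<beta>) * (\<Prod>i<d. y i ^ \<beta> i)) = (0::complex)" by simp
    thus "(\<Sum>\<beta>\<in>Bx n. a \<beta> * mon d \<beta> (\<lambda>i. of_real (y i))) = 0"
      unfolding a_def monR by simp
  qed
  hence a0: "\<forall>\<beta>\<in>Bx n. a \<beta> = 0" by (rule Z[OF nz])
  have "\<nu> * hcoef d c M \<beta> \<in> \<real>" for \<beta>
  proof (cases "\<beta> \<in> Bx n")
    case True
    hence "(of_real (Im (\<nu> * hcoef d c M \<beta>)) :: complex) = 0" using a0 unfolding a_def by blast
    hence "Im (\<nu> * hcoef d c M \<beta>) = 0" by (simp only: of_real_eq_0_iff)
    thus ?thesis using complex_is_Real_iff by blast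
  next
    case False
    hence "hcoef d c M \<beta> = 0" using hsup by blast
    thus ?thesis by simp
  qed
  thus ?thesis using n1 by blast
qed


theorem proposition14p5:
  fixes d M :: nat and c :: "(nat \<Rightarrow> nat) \<Rightarrow> complex"
  assumes "is_mpoly d c"
    and "\<forall>z. (\<forall>i<d. norm (z i) < 1) \<longrightarrow> peval d c z \<noteq> 0"
    and "vanishes_to_order d c M"
  shows "(\<forall>\<zeta>. peval d c (\<lambda>i. 1 - \<zeta> i) = (\<Sum>j=M..(\<Sum>i<d. mdeg c i). peval d (hcoef d c j) \<zeta>))
       \<and> (\<forall>\<zeta>. peval d (reflect c) (\<lambda>i. 1 - \<zeta> i)
                = (\<Sum>j=M..(\<Sum>i<d. mdeg c i). peval d (hcoef d (reflect c) j) \<zeta>))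
       \<and> (\<exists>\<nu>. norm \<nu> = 1 \<and> (\<forall>\<beta>. \<nu> * hcoef d c M \<beta> \<in> \<real>))
       \<and> (\<exists>\<mu>. norm \<mu> = 1 \<and> (\<forall>\<beta>. hcoef d (reflect c) M \<beta> = \<mu> * hcoef d c M \<beta>))"
proof -
  have sup: "{\<alpha>. c \<alpha> \<noteq> 0} \<subseteq> Bx (mdeg c)" and nz: "\<forall>i\<ge>d. mdeg c i = 0"
    using mdeg_props[OF assms(1)] by auto
  have van0: "\<forall>j<M. \<forall>\<beta>. hcoef d c j \<beta> = 0" using assms(3) by (simp add: vanishes_to_order_def)
  have c1: "\<forall>\<zeta>. peval d c (\<lambda>i. 1 - \<zeta> i) = (\<Sum>j=M..(\<Sum>i<d. mdeg c i). peval d (hcoef d c j) \<zeta>)"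
    using expandM[OF sup nz van0] by blast
  have rvan0: "\<forall>j<M. \<forall>\<beta>. hcoef d (reflect c) j \<beta> = 0"
    using reflect_hcoef[OF sup nz van0] by simp
  have c2: "\<forall>\<zeta>. peval d (reflect c) (\<lambda>i. 1 - \<zeta> i)
                = (\<Sum>j=M..(\<Sum>i<d. mdeg c i). peval d (hcoef d (reflect c) j) \<zeta>)"
    using expandM[OF reflect_supp nz rvan0] by blast
  obtain \<nu> where nu1: "norm \<nu> = 1" and nuR: "\<forall>\<beta>. \<nu> * hcoef d c M \<beta> \<in> \<real>"
    using realP[OF assms] by blast
  have nucnj: "\<nu> * cnj \<nu> = 1"
  proof -
    have "\<nu> * cnj \<nu> = of_real ((norm \<nu>)^2)" by (rule complex_norm_square[symmetric])
    thus ?thesis using nu1 by simp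
  qed
  have c4: "\<forall>\<beta>. hcoef d (reflect c) M \<beta> = ((-1)^M * \<nu>^2) * hcoef d c M \<beta>"
  proof
    fix \<beta>
    have r: "hcoef d (reflect c) M \<beta> = (-1)^M * cnj (hcoef d c M \<beta>)"
      using reflect_hcoef[OF sup nz van0, of M \<beta>] by simp
    have "cnj (\<nu> * hcoef d c M \<beta>) = \<nu> * hcoef d c M \<beta>" using nuR by (simp add: Reals_cnj_iff)
    hence e: "cnj \<nu> * cnj (hcoef d c M \<beta>) = \<nu> * hcoef d c M \<beta>" by simp
    have "cnj (hcoef d c M \<beta>) = (\<nu> * cnj \<nu>) * cnj (hcoef d c M \<beta>)" using nucnj by simp
    also have "\<dots> = \<nu> * (\<nu> * hcoef d c M \<beta>)" using e by (simp add: mult.assoc)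
    finally have "cnj (hcoef d c M \<beta>) = \<nu>^2 * hcoef d c M \<beta>" by (simp add: power2_eq_square mult.assoc)
    thus "hcoef d (reflect c) M \<beta> = ((-1)^M * \<nu>^2) * hcoef d c M \<beta>" using r by (simp add: mult.assoc)
  qed
  have "norm ((-1::complex)^M * \<nu>^2) = 1" using nu1 by (simp add: norm_mult norm_power)
  hence "\<exists>\<mu>. norm \<mu> = 1 \<and> (\<forall>\<beta>. hcoef d (reflect c) M \<beta> = \<mu> * hcoef d c M \<beta>)" using c4 by blast
  thus ?thesis using c1 c2 nu1 nuR by blast
qed

end
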